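(* In any oriented graph, a vertex of maximum score is a weak king.
   Context: An oriented graph is a digraph with no loops and no pair of symmetric arcs. For vertices $u,v$ write $u(1\text{-}0)v$ if there is an arc from $u$ to $v$, and $u(0\text{-}0)v$ if there is no arc between $u$ and $v$. If $D$ has $n$ vertices, the score of a vertex $v$ is $s(v) = n-1+d^+(v)-d^-(v)$, where $d^+(v), d^-(v)$ are the out- and indegree of $v$. A vertex $v$ is weakly reachable within two steps from $u$ if $u(1\text{-}0)v$, or $u(0\text{-}0)v$, or for some vertex $w$ one has $u(1\text{-}0)w(1\text{-}0)v$, or $u(1\text{-}0)w(0\text{-}0)v$, or $u(0\text{-}0)w(1\text{-}0)v$. A vertex $u$ of $D$ is a weak king if every other vertex of $D$ is weakly reachable within two steps from $u$. *)

theory Defs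
  imports Main
begin

definition oriented_graph :: "'a set \<Rightarrow> ('a \<Rightarrow> 'a \<Rightarrow> bool) \<Rightarrow> bool" where
  "oriented_graph V A \<longleftrightarrow> finite V
     \<and> (\<forall>u v. A u v \<longrightarrow> u \<in> V \<and> v \<in> V)
     \<and> (\<forall>v. \<not> A v v)
     \<and> (\<forall>u v. A u v \<longrightarrow> \<not> A v u)"

definition outdeg :: "'a set \<Rightarrow> ('a \<Rightarrow> 'a \<Rightarrow> bool) \<Rightarrow> 'a \<Rightarrow> nat" where
  "outdeg V A v = card {w \<in> V. A v w}"

definition indeg :: "'a set \<Rightarrow> ('a \<Rightarrow> 'a \<Rightarrow> bool) \<Rightarrow> 'a \<Rightarrow> nat" where
  "indeg V A v = card {w \<in> V. A w v}"

definition score :: "'a set \<Rightarrow> ('a \<Rightarrow> 'a \<Rightarrow> bool) \<Rightarrow> 'a \<Rightarrow> int" where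
  "score V A v = int (card V) - 1 + int (outdeg V A v) - int (indeg V A v)"

definition arc10 :: "('a \<Rightarrow> 'a \<Rightarrow> bool) \<Rightarrow> 'a \<Rightarrow> 'a \<Rightarrow> bool" where
  "arc10 A u v \<longleftrightarrow> A u v"

definition arc00 :: "('a \<Rightarrow> 'a \<Rightarrow> bool) \<Rightarrow> 'a \<Rightarrow> 'a \<Rightarrow> bool" where
  "arc00 A u v \<longleftrightarrow> \<not> A u v \<and> \<not> A v u"

definition weakly_reach2 :: "'a set \<Rightarrow> ('a \<Rightarrow> 'a \<Rightarrow> bool) \<Rightarrow> 'a \<Rightarrow> 'a \<Rightarrow> bool" where
  "weakly_reach2 V A u v \<longleftrightarrow>
     arc10 A u v \<or> arc00 A u v \<or>
     (\<exists>w\<in>V. (arc10 A u w \<and> arc10 A w v) \<or> (arc10 A u w \<and> arc00 A w v)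
            \<or> (arc00 A u w \<and> arc10 A w v))"

definition weak_king :: "'a set \<Rightarrow> ('a \<Rightarrow> 'a \<Rightarrow> bool) \<Rightarrow> 'a \<Rightarrow> bool" where
  "weak_king V A u \<longleftrightarrow> u \<in> V \<and> (\<forall>v\<in>V. v \<noteq> u \<longrightarrow> weakly_reach2 V A u v)"

end

theory Submission
  imports Defs
begin

theorem theorem5:
  fixes V :: "'a set" and A :: "'a \<Rightarrow> 'a \<Rightarrow> bool" and u :: 'a
  assumes "oriented_graph V A"
    and "u \<in> V"
    and "\<forall>v\<in>V. score V A v \<le> score V A u"
  shows "weak_king V A u"
proof -
  have fin: "finite V" and inV: "\<And>x y. A x y \<Longrightarrow> x \<in> V \<and> y \<in> V"
    and irr: "\<And>x. \<not> A x x" and asym: "\<And>x y. A x y \<Longrightarrow> \<not> A y x"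
    using assms(1) unfolding oriented_graph_def by auto
  show ?thesis unfolding weak_king_def
  proof (intro conjI ballI impI)
    show "u \<in> V" by fact
    fix v assume vV: "v \<in> V" and vu: "v \<noteq> u"
    show "weakly_reach2 V A u v"
    proof (rule ccontr)
      assume nr: "\<not> weakly_reach2 V A u v"
      hence Avu: "A v u" and nAuv: "\<not> A u v"
        and c1: "\<And>w. w \<in> V \<Longrightarrow> A u w \<Longrightarrow> A v w"
        and c2: "\<And>w. w \<in> V \<Longrightarrow> A w v \<Longrightarrow> A w u"
        unfolding weakly_reach2_def arc10_def arc00_def by blast+
      have s1: "insert u {w \<in> V. A u w} \<subseteq> {w \<in> V. A v w}"
        using c1 Avu assms(2) by auto
      have s2: "{w \<in> V. A w v} \<subseteq> {w \<in> V. A w u} - {v}"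
        using c2 irr by auto
      have "card (insert u {w \<in> V. A u w}) \<le> card {w \<in> V. A v w}"
        by (rule card_mono) (use fin s1 in auto)
      moreover have "card (insert u {w \<in> V. A u w}) = Suc (card {w \<in> V. A u w})"
        using fin irr by auto
      moreover have "card {w \<in> V. A w v} \<le> card ({w \<in> V. A w u} - {v})"
        by (rule card_mono) (use fin s2 in auto)
      moreover have "card ({w \<in> V. A w u} - {v}) = card {w \<in> V. A w u} - 1"
        using fin Avu vV by auto
      moreover have "card {w \<in> V. A w u} \<ge> 1"
      proof -
        have "{w \<in> V. A w u} \<noteq> {}" using Avu vV by auto
        moreover have "finite {w \<in> V. A w u}" using fin by auto
        ultimately show ?thesis by (simp add: Suc_leI card_gt_0_iff)
      qed
      ultimately have "score V A v > score V A u"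
        unfolding score_def outdeg_def indeg_def by linarith
      thus False using assms(3) vV by auto
    qed
  qed
qed

end
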